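(* Let $(X,\sigma,T)$ be as in the context and $\xi\in X_{eq}$. The following are equivalent: (1) every point of $\pi_{eq}^{-1}(\xi)$ separates the idempotents of $L$; (2) for each $x\in X$, $R^{\xi-\pi_{eq}(x)}_{\mathrm{ev}_x}\subset\mathcal R$; (3) for each $x\in\pi_{eq}^{-1}(\xi)$, $R^0_{\mathrm{ev}_x}\subset\mathcal R$.
   Context: $T$ abelian group acting continuously, minimally and non-distally by $\sigma$ on a compact Hausdorff space $X$. $E(X)$ is the Ellis semigroup (closure of $\{\sigma^t\}$ in $X^X$, pointwise topology). $\pi_{eq}:X\to X_{eq}$ is the maximal equicontinuous factor, $X_{eq}$ a compact abelian group with neutral element $0$. Fix a minimal idempotent $e$ and $L=E(X)e$; $L$ is a completely simple semigroup, so each $f\in L$ has a unique normal inverse $f^{-1}$ (with $ff^{-1}f=f$, $f^{-1}ff^{-1}=f^{-1}$, $ff^{-1}=f^{-1}f$); put $f^0=f^{-1}f$ (an idempotent with $f^0f=f$). Green's relation $\mathcal R$ on $L$: $(f_1,f_2)\in\mathcal R$ iff $f_1^0=f_2^0$. $J_L$ denotes the set of idempotents of $L$; a point $x\in X$ separates the idempotents of $L$ if $p\mapsto p(x)$ is injective on $J_L$. $\tilde\pi_{eq}:L\to X_{eq}$, $\tilde\pi_{eq}(f)=\pi_{eq}(f(x))-\pi_{eq}(x)$ (independent of $x$). For $x\in X$, $\zeta\in X_{eq}$: $R^\zeta_{\mathrm{ev}_x}=\{(f_1,f_2)\in L\times L: f_1(x)=f_2(x),\ \tilde\pi_{eq}(f_1)=\tilde\pi_{eq}(f_2)=\zeta\}$.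 *)

theory Defs
  imports "HOL-Analysis.Analysis"
begin

text \<open>An action of the abelian group T on X by homeomorphisms sigma t
  (continuity of each sigma t; T carries no topology beyond that).\<close>
definition group_action :: "('t::ab_group_add \<Rightarrow> 'x \<Rightarrow> 'x) \<Rightarrow> bool" where
  "group_action \<sigma> \<longleftrightarrow> \<sigma> 0 = id \<and> (\<forall>s t. \<sigma> (s + t) = \<sigma> s \<circ> \<sigma> t)"

definition continuous_action ::
  "('t::ab_group_add \<Rightarrow> 'x::topological_space \<Rightarrow> 'x) \<Rightarrow> bool" where
  "continuous_action \<sigma> \<longleftrightarrow> group_action \<sigma> \<and> (\<forall>t. continuous_on UNIV (\<sigma> t))"

definition minimal_action :: "('t \<Rightarrow> 'x::topological_space \<Rightarrow> 'x) \<Rightarrow> bool" where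
  "minimal_action \<sigma> \<longleftrightarrow> (\<forall>x. closure (range (\<lambda>t. \<sigma> t x)) = UNIV)"

definition proximal :: "('t \<Rightarrow> 'x::topological_space \<Rightarrow> 'x) \<Rightarrow> 'x \<Rightarrow> 'x \<Rightarrow> bool" where
  "proximal \<sigma> x y \<longleftrightarrow> (\<exists>z. (z, z) \<in> closure (range (\<lambda>t. (\<sigma> t x, \<sigma> t y))))"

definition distal_action :: "('t \<Rightarrow> 'x::topological_space \<Rightarrow> 'x) \<Rightarrow> bool" where
  "distal_action \<sigma> \<longleftrightarrow> (\<forall>x y. proximal \<sigma> x y \<longrightarrow> x = y)"

text \<open>The Ellis semigroup: closure of the maps sigma t in X^X with the
  product (pointwise convergence) topology; the product is composition.\<close>
definition Ellis :: "('t \<Rightarrow> 'x \<Rightarrow> 'x::topological_space) \<Rightarrow> ('x \<Rightarrow> 'x) set" where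
  "Ellis \<sigma> = closure (range \<sigma>)"

definition left_ideal :: "('x \<Rightarrow> 'x) set \<Rightarrow> ('x \<Rightarrow> 'x) set \<Rightarrow> bool" where
  "left_ideal E I \<longleftrightarrow> I \<noteq> {} \<and> I \<subseteq> E \<and> (\<forall>f\<in>E. \<forall>g\<in>I. f \<circ> g \<in> I)"

definition minimal_left_ideal :: "('x \<Rightarrow> 'x) set \<Rightarrow> ('x \<Rightarrow> 'x) set \<Rightarrow> bool" where
  "minimal_left_ideal E I \<longleftrightarrow> left_ideal E I \<and> (\<forall>J. left_ideal E J \<and> J \<subseteq> I \<longrightarrow> J = I)"

definition minimal_idempotent :: "('x \<Rightarrow> 'x) set \<Rightarrow> ('x \<Rightarrow> 'x) \<Rightarrow> bool" where
  "minimal_idempotent E e \<longleftrightarrow> e \<in> E \<and> e \<circ> e = e \<and> (\<exists>I. minimal_left_ideal E I \<and> e \<in> I)"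

definition Lideal :: "('x \<Rightarrow> 'x) set \<Rightarrow> ('x \<Rightarrow> 'x) \<Rightarrow> ('x \<Rightarrow> 'x) set" where
  "Lideal E e = (\<lambda>f. f \<circ> e) ` E"

definition normal_inv :: "('x \<Rightarrow> 'x) set \<Rightarrow> ('x \<Rightarrow> 'x) \<Rightarrow> ('x \<Rightarrow> 'x)" where
  "normal_inv L f = (THE g. g \<in> L \<and> f \<circ> g \<circ> f = f \<and> g \<circ> f \<circ> g = g \<and> f \<circ> g = g \<circ> f)"

definition idem0 :: "('x \<Rightarrow> 'x) set \<Rightarrow> ('x \<Rightarrow> 'x) \<Rightarrow> ('x \<Rightarrow> 'x)" where
  "idem0 L f = normal_inv L f \<circ> f"

definition greenR :: "('x \<Rightarrow> 'x) set \<Rightarrow> (('x \<Rightarrow> 'x) \<times> ('x \<Rightarrow> 'x)) set" where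
  "greenR L = {(f1, f2). f1 \<in> L \<and> f2 \<in> L \<and> idem0 L f1 = idem0 L f2}"

definition idempotents :: "('x \<Rightarrow> 'x) set \<Rightarrow> ('x \<Rightarrow> 'x) set" where
  "idempotents L = {p \<in> L. p \<circ> p = p}"

definition separates_idempotents :: "('x \<Rightarrow> 'x) set \<Rightarrow> 'x \<Rightarrow> bool" where
  "separates_idempotents L x \<longleftrightarrow> inj_on (\<lambda>p. p x) (idempotents L)"

text \<open>A factor of (X, sigma) onto a compact Hausdorff space Y (an abstract
  topology; the points of Y are taken to be subsets of X, which is no loss of
  generality since every factor is isomorphic to the one whose points are its
  fibres), with induced maps tau t, such that the family tau is equicontinuous
  (for the unique uniformity of the compact Hausdorff space Y: entourages are
  the neighbourhoods of the diagonal).\<close>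
definition equicontinuous_factor ::
  "('t \<Rightarrow> 'x::topological_space \<Rightarrow> 'x) \<Rightarrow> ('x \<Rightarrow> 'x set) \<Rightarrow> bool" where
  "equicontinuous_factor \<sigma> \<psi> \<longleftrightarrow>
    (\<exists>(Y :: 'x set topology) (\<tau> :: 't \<Rightarrow> 'x set \<Rightarrow> 'x set).
       compact_space Y \<and> Hausdorff_space Y \<and>
       continuous_map euclidean Y \<psi> \<and> \<psi> ` UNIV = topspace Y \<and>
       (\<forall>t. continuous_map Y Y (\<tau> t)) \<and>
       (\<forall>t x. \<psi> (\<sigma> t x) = \<tau> t (\<psi> x)) \<and>
       (\<forall>y\<in>topspace Y. \<forall>W. openin (prod_topology Y Y) W \<and> (\<forall>z\<in>topspace Y. (z, z) \<in> W) \<longrightarrow>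
          (\<exists>U. openin Y U \<and> y \<in> U \<and> (\<forall>t. \<forall>y'\<in>U. (\<tau> t y, \<tau> t y') \<in> W))))"

definition max_equicontinuous_factor ::
  "('t::ab_group_add \<Rightarrow> 'x::topological_space \<Rightarrow> 'x) \<Rightarrow>
   ('x \<Rightarrow> 'g::{topological_ab_group_add, t2_space}) \<Rightarrow> ('t \<Rightarrow> 'g) \<Rightarrow> bool" where
  "max_equicontinuous_factor \<sigma> \<pi> rho \<longleftrightarrow>
     compact (UNIV :: 'g set) \<and>
     continuous_on UNIV \<pi> \<and> surj \<pi> \<and>
     (\<forall>s t. rho (s + t) = rho s + rho t) \<and>
     (\<forall>t x. \<pi> (\<sigma> t x) = \<pi> x + rho t) \<and>
     (\<forall>\<psi>. equicontinuous_factor \<sigma> \<psi> \<longrightarrow> (\<forall>x y. \<pi> x = \<pi> y \<longrightarrow> \<psi> x = \<psi> y))"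

text \<open>tilde pi_eq (f) = pi(f x) - pi(x), evaluated at the point x in question
  (it is independent of x), and the relation R^zeta_{ev_x}.\<close>
definition pi_tilde :: "('x \<Rightarrow> 'g::ab_group_add) \<Rightarrow> ('x \<Rightarrow> 'x) \<Rightarrow> 'x \<Rightarrow> 'g" where
  "pi_tilde \<pi> f x = \<pi> (f x) - \<pi> x"

definition R_ev :: "('x \<Rightarrow> 'g::ab_group_add) \<Rightarrow> ('x \<Rightarrow> 'x) set \<Rightarrow> 'g \<Rightarrow> 'x \<Rightarrow>
    (('x \<Rightarrow> 'x) \<times> ('x \<Rightarrow> 'x)) set" where
  "R_ev \<pi> L \<zeta> x = {(f1, f2). f1 \<in> L \<and> f2 \<in> L \<and> f1 x = f2 x \<and>
      pi_tilde \<pi> f1 x = \<zeta> \<and> pi_tilde \<pi> f2 x = \<zeta>}"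

end

theory Submission
  imports Defs
begin

lemma ellis_comp:
  fixes \<sigma> :: "'t::ab_group_add \<Rightarrow> 'x::topological_space \<Rightarrow> 'x"
  assumes ca: "continuous_action \<sigma>" and p: "p \<in> Ellis \<sigma>" and q: "q \<in> Ellis \<sigma>"
  shows "p \<circ> q \<in> Ellis \<sigma>"
proof -
  have ga: "\<And>s t. \<sigma> (s + t) = \<sigma> s \<circ> \<sigma> t" and ct: "\<And>t. continuous_on UNIV (\<sigma> t)"
    using ca by (auto simp: continuous_action_def group_action_def)
  have cl: "closed (Ellis \<sigma>)" by (simp add: Ellis_def)
  have step1: "\<sigma> t \<circ> r \<in> Ellis \<sigma>" if r: "r \<in> Ellis \<sigma>" for t r
  proof -
    have c: "continuous_on (closure (range \<sigma>)) (\<lambda>r. \<sigma> t \<circ> r)"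
    proof (rule continuous_on_coordinatewise_then_product)
      fix i
      have "continuous_on UNIV (\<lambda>r::'x\<Rightarrow>'x. \<sigma> t (r i))"
        by (rule continuous_on_compose2[OF ct continuous_on_product_coordinates]) auto
      then show "continuous_on (closure (range \<sigma>)) (\<lambda>r. (\<sigma> t \<circ> r) i)"
        by (auto intro: continuous_on_subset)
    qed
    have "(\<lambda>r. \<sigma> t \<circ> r) ` range \<sigma> \<subseteq> Ellis \<sigma>"
      using closure_subset[of "range \<sigma>"] by (auto simp: Ellis_def ga[symmetric])
    from image_closure_subset[OF c cl this] r show ?thesis by (auto simp: Ellis_def)
  qed
  have c: "continuous_on (closure (range \<sigma>)) (\<lambda>r. r \<circ> q)"
    by (rule continuous_on_coordinatewise_then_product)
      (auto intro: continuous_on_subset[OF continuous_on_product_coordinates])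
  have "(\<lambda>r. r \<circ> q) ` range \<sigma> \<subseteq> Ellis \<sigma>" using step1 q by auto
  from image_closure_subset[OF c cl this] p show ?thesis by (auto simp: Ellis_def)
qed

lemma pi_indep:
  fixes \<sigma> :: "'t::ab_group_add \<Rightarrow> 'x::topological_space \<Rightarrow> 'x"
    and \<pi> :: "'x \<Rightarrow> 'g::{topological_ab_group_add, t2_space}"
  assumes m: "max_equicontinuous_factor \<sigma> \<pi> rho" and f: "f \<in> Ellis \<sigma>"
  shows "\<pi> (f x) - \<pi> x = \<pi> (f y) - \<pi> y"
proof -
  have cp: "continuous_on UNIV \<pi>" and eq: "\<And>t x. \<pi> (\<sigma> t x) = \<pi> x + rho t"
    using m by (auto simp: max_equicontinuous_factor_def)
  have cz: "continuous_on UNIV (\<lambda>f::'x\<Rightarrow>'x. \<pi> (f z) - \<pi> z)" for z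
    by (intro continuous_on_diff continuous_on_const
        continuous_on_compose2[OF cp continuous_on_product_coordinates]) auto
  have "closed {f. \<pi> (f x) - \<pi> x = \<pi> (f y) - \<pi> y}"
    by (rule closed_Collect_eq[OF cz cz])
  moreover have "range \<sigma> \<subseteq> {f. \<pi> (f x) - \<pi> x = \<pi> (f y) - \<pi> y}"
    by (auto simp: eq)
  ultimately have "Ellis \<sigma> \<subseteq> {f. \<pi> (f x) - \<pi> x = \<pi> (f y) - \<pi> y}"
    unfolding Ellis_def by (rule closure_minimal[rotated])
  then show ?thesis using f by auto
qed

lemma idem_pi:
  fixes \<sigma> :: "'t::ab_group_add \<Rightarrow> 'x::topological_space \<Rightarrow> 'x"
    and \<pi> :: "'x \<Rightarrow> 'g::{topological_ab_group_add, t2_space}"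
  assumes m: "max_equicontinuous_factor \<sigma> \<pi> rho" and u: "u \<in> Ellis \<sigma>" and uu: "u \<circ> u = u"
  shows "pi_tilde \<pi> u y = 0"
proof -
  have "\<pi> (u (u y)) - \<pi> (u y) = \<pi> (u y) - \<pi> y" by (rule pi_indep[OF m u])
  moreover have "u (u y) = u y" using uu by (metis comp_apply)
  ultimately show ?thesis by (simp add: pi_tilde_def)
qed

lemma ninv_unique:
  assumes "f \<circ> g \<circ> f = f" "g \<circ> f \<circ> g = g" "f \<circ> g = g \<circ> f"
    "f \<circ> g' \<circ> f = f" "g' \<circ> f \<circ> g' = g'" "f \<circ> g' = g' \<circ> f"
  shows "g = g'"
proof -
  have e1: "g \<circ> f = (g \<circ> f) \<circ> (g' \<circ> f)"
  proof -
    have "g \<circ> f = g \<circ> (f \<circ> g' \<circ> f)" using assms(4) by simp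
    also have "\<dots> = (g \<circ> f) \<circ> (g' \<circ> f)" by (simp only: o_assoc)
    finally show ?thesis .
  qed
  have e2: "g' \<circ> f = (g \<circ> f) \<circ> (g' \<circ> f)"
  proof -
    have "g' \<circ> f = f \<circ> g'" using assms(6) by simp
    also have "\<dots> = (f \<circ> g \<circ> f) \<circ> g'" using assms(1) by simp
    also have "\<dots> = (f \<circ> g) \<circ> (f \<circ> g')" by (simp only: o_assoc)
    also have "\<dots> = (g \<circ> f) \<circ> (g' \<circ> f)" using assms(3,6) by (simp only:)
    finally show ?thesis .
  qed
  have e12: "g \<circ> f = g' \<circ> f" using e1 e2 by (rule trans[OF _ sym])
  have "g = g \<circ> (f \<circ> g)" using assms(2) by (simp add: o_assoc)
  also have "\<dots> = g \<circ> (f \<circ> g')" using e12 assms(3,6) by simp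
  also have "\<dots> = (g \<circ> f) \<circ> g'" by (simp add: o_assoc)
  also have "\<dots> = g'" using e12 assms(5) by simp
  finally show ?thesis .
qed

locale ellis_alg =
  fixes E :: "('x \<Rightarrow> 'x) set" and e :: "'x \<Rightarrow> 'x"
  assumes comp: "\<And>p q. p \<in> E \<Longrightarrow> q \<in> E \<Longrightarrow> p \<circ> q \<in> E"
    and mi: "minimal_idempotent E e"
begin

definition "L = Lideal E e"

lemma eE: "e \<in> E" and ee: "e \<circ> e = e" using mi by (auto simp: minimal_idempotent_def)

lemma L_sub: "L \<subseteq> E" using comp eE by (auto simp: L_def Lideal_def)
lemma eL: "e \<in> L" using eE ee by (auto simp: L_def Lideal_def intro!: image_eqI[of _ _ e])
lemma L_left: "p \<in> E \<Longrightarrow> q \<in> L \<Longrightarrow> p \<circ> q \<in> L"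
  using comp by (auto simp: L_def Lideal_def o_assoc)

lemma L_eq_I: "\<exists>I. minimal_left_ideal E I \<and> L = I"
proof -
  obtain I where I: "minimal_left_ideal E I" "e \<in> I" using mi by (auto simp: minimal_idempotent_def)
  have "L \<subseteq> I" using I eE by (auto simp: L_def Lideal_def minimal_left_ideal_def left_ideal_def)
  moreover have "left_ideal E L" using eL L_sub L_left by (auto simp: left_ideal_def)
  ultimately show ?thesis using I by (auto simp: minimal_left_ideal_def)
qed

lemma Lf: assumes f: "f \<in> L" shows "(\<lambda>g. g \<circ> f) ` L = L"
proof -
  obtain I where I: "minimal_left_ideal E I" "L = I" using L_eq_I by auto
  have "left_ideal E ((\<lambda>g. g \<circ> f) ` L)"
    unfolding left_ideal_def
  proof (intro conjI ballI)
    show "(\<lambda>g. g \<circ> f) ` L \<noteq> {}" using eL by auto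
    show "(\<lambda>g. g \<circ> f) ` L \<subseteq> E" using L_sub f comp by auto
    fix p h assume "p \<in> E" "h \<in> (\<lambda>g. g \<circ> f) ` L"
    then obtain g where "g \<in> L" "h = g \<circ> f" by auto
    then show "p \<circ> h \<in> (\<lambda>g. g \<circ> f) ` L"
      using L_left[OF \<open>p \<in> E\<close> \<open>g \<in> L\<close>] by (auto simp: o_assoc intro!: image_eqI[of _ _ "p \<circ> g"])
  qed
  moreover have "(\<lambda>g. g \<circ> f) ` L \<subseteq> L" using L_left L_sub f by auto
  ultimately show ?thesis using I by (auto simp: minimal_left_ideal_def)
qed

lemma Lf_ex: assumes "f \<in> L" "w \<in> L" obtains h where "h \<in> L" "h \<circ> f = w"
  using Lf[OF assms(1)] assms(2) by (metis imageE)

lemma right_id: assumes "u \<in> L" "u \<circ> u = u" "v \<in> L" shows "v \<circ> u = v"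
proof -
  obtain w where "w \<in> L" "w \<circ> u = v" using Lf_ex[OF assms(1) assms(3)] by blast
  then have "v \<circ> u = w \<circ> (u \<circ> u)" by (simp add: o_assoc)
  then show ?thesis using assms(2) \<open>w \<circ> u = v\<close> by simp
qed

lemma ninv_ex: assumes f: "f \<in> L"
  shows "\<exists>g\<in>L. f \<circ> g \<circ> f = f \<and> g \<circ> f \<circ> g = g \<and> f \<circ> g = g \<circ> f"
proof -
  obtain h where h: "h \<in> L" "h \<circ> f = e" using Lf_ex[OF f eL] by blast
  define w where "w = f \<circ> h"
  have fe: "f \<circ> e = f" using right_id[OF eL ee f] .
  have wL: "w \<in> L" using L_left f h L_sub by (auto simp: w_def)
  have ww: "w \<circ> w = w"
  proof -
    have "w \<circ> w = f \<circ> (h \<circ> f) \<circ> h" by (simp add: w_def o_assoc)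
    then show ?thesis using fe h by (simp add: w_def)
  qed
  have wf: "w \<circ> f = f"
  proof -
    have "w \<circ> f = f \<circ> (h \<circ> f)" by (simp add: w_def o_assoc)
    then show ?thesis using fe h by simp
  qed
  obtain k where k: "k \<in> L" "k \<circ> f = w" using Lf_ex[OF f wL] by blast
  define g where "g = w \<circ> k"
  have gL: "g \<in> L" using L_left k wL L_sub by (auto simp: g_def)
  have gf: "g \<circ> f = w"
  proof -
    have "g \<circ> f = w \<circ> (k \<circ> f)" by (simp add: g_def o_assoc)
    then show ?thesis using k ww by simp
  qed
  have wg: "w \<circ> g = g"
  proof -
    have "w \<circ> g = (w \<circ> w) \<circ> k" by (simp add: g_def o_assoc)
    then show ?thesis using ww by (simp add: g_def)
  qed
  obtain g' where g': "g' \<in> L" "g' \<circ> g = w" using Lf_ex[OF gL wL] by blast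
  have g'w: "g' \<circ> w = g'" using right_id[OF wL ww g'(1)] .
  have "f \<circ> g = (w \<circ> f) \<circ> g" using wf by simp
  also have "\<dots> = (g' \<circ> g) \<circ> f \<circ> g" using g' by simp
  also have "\<dots> = g' \<circ> (g \<circ> f) \<circ> g" by (simp only: o_assoc)
  also have "\<dots> = w" using gf g'w g' by simp
  finally have fg: "f \<circ> g = w" .
  have h1: "f \<circ> g \<circ> f = f" using fg wf by simp
  have h2: "g \<circ> f \<circ> g = g" using gf wg by simp
  have h3: "f \<circ> g = g \<circ> f" using fg gf by (rule trans[OF _ sym])
  show ?thesis by (rule bexI[of _ g]) (intro conjI h1 h2 h3, rule gL)
qed

lemma ninv: assumes f: "f \<in> L"
  shows "normal_inv L f \<in> L \<and> f \<circ> normal_inv L f \<circ> f = f \<and>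
     normal_inv L f \<circ> f \<circ> normal_inv L f = normal_inv L f \<and> f \<circ> normal_inv L f = normal_inv L f \<circ> f"
proof -
  obtain g where g: "g \<in> L" "f \<circ> g \<circ> f = f" "g \<circ> f \<circ> g = g" "f \<circ> g = g \<circ> f"
    using ninv_ex[OF f] by blast
  have "\<exists>!g. g \<in> L \<and> f \<circ> g \<circ> f = f \<and> g \<circ> f \<circ> g = g \<and> f \<circ> g = g \<circ> f"
  proof (rule ex1I[of _ g])
    show "g \<in> L \<and> f \<circ> g \<circ> f = f \<and> g \<circ> f \<circ> g = g \<and> f \<circ> g = g \<circ> f"
      using g by (intro conjI)
    fix g' assume h: "g' \<in> L \<and> f \<circ> g' \<circ> f = f \<and> g' \<circ> f \<circ> g' = g' \<and> f \<circ> g' = g' \<circ> f"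
    from h have h1: "f \<circ> g' \<circ> f = f" and h2: "g' \<circ> f \<circ> g' = g'" and h3: "f \<circ> g' = g' \<circ> f"
      by (meson conjunct1 conjunct2)+
    show "g' = g" by (rule ninv_unique[OF h1 h2 h3 g(2) g(3) g(4)])
  qed
  then show ?thesis unfolding normal_inv_def by (rule theI')
qed

lemma idem0_props: assumes f: "f \<in> L"
  shows "idem0 L f \<in> L" "idem0 L f \<circ> idem0 L f = idem0 L f" "idem0 L f \<circ> f = f"
proof -
  let ?g = "normal_inv L f"
  have n: "?g \<in> L" "f \<circ> ?g \<circ> f = f" "?g \<circ> f \<circ> ?g = ?g" "f \<circ> ?g = ?g \<circ> f"
    using ninv[OF f] by auto
  show "idem0 L f \<in> L" using n L_left L_sub f by (auto simp: idem0_def)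
  have "idem0 L f \<circ> idem0 L f = (?g \<circ> f \<circ> ?g) \<circ> f" by (simp add: idem0_def o_assoc)
  then show "idem0 L f \<circ> idem0 L f = idem0 L f" using n by (simp add: idem0_def)
  have "idem0 L f \<circ> f = f \<circ> ?g \<circ> f" using n(4) by (simp add: idem0_def)
  then show "idem0 L f \<circ> f = f" using n by simp
qed

lemma idem0_idem: assumes "u \<in> L" "u \<circ> u = u" shows "idem0 L u = u"
proof -
  have "normal_inv L u = u"
    unfolding normal_inv_def
    apply (rule the_equality)
    using assms apply simp
  proof -
    fix g assume "g \<in> L \<and> u \<circ> g \<circ> u = u \<and> g \<circ> u \<circ> g = g \<and> u \<circ> g = g \<circ> u"
    then show "g = u" by (intro ninv_unique[of u g u]) (auto simp: assms(2))
  qed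
  then show ?thesis using assms by (simp add: idem0_def)
qed

end

theorem mainTheorem6:
  fixes \<sigma> :: "'t::ab_group_add \<Rightarrow> 'x::t2_space \<Rightarrow> 'x"
    and \<pi> :: "'x \<Rightarrow> 'g::{topological_ab_group_add, t2_space}"
    and rho :: "'t \<Rightarrow> 'g"
    and e :: "'x \<Rightarrow> 'x"
    and \<xi> :: 'g
  assumes "compact (UNIV :: 'x set)"
    and "continuous_action \<sigma>"
    and "minimal_action \<sigma>"
    and "\<not> distal_action \<sigma>"
    and "max_equicontinuous_factor \<sigma> \<pi> rho"
    and "minimal_idempotent (Ellis \<sigma>) e"
  shows "((\<forall>x. \<pi> x = \<xi> \<longrightarrow> separates_idempotents (Lideal (Ellis \<sigma>) e) x)
            \<longleftrightarrow> (\<forall>x. R_ev \<pi> (Lideal (Ellis \<sigma>) e) (\<xi> - \<pi> x) x \<subseteq> greenR (Lideal (Ellis \<sigma>) e)))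
       \<and> ((\<forall>x. R_ev \<pi> (Lideal (Ellis \<sigma>) e) (\<xi> - \<pi> x) x \<subseteq> greenR (Lideal (Ellis \<sigma>) e))
            \<longleftrightarrow> (\<forall>x. \<pi> x = \<xi> \<longrightarrow> R_ev \<pi> (Lideal (Ellis \<sigma>) e) 0 x \<subseteq> greenR (Lideal (Ellis \<sigma>) e)))"
proof -
  interpret ellis_alg "Ellis \<sigma>" e
    using ellis_comp[OF assms(2)] assms(6) by unfold_locales auto
  let ?L = "Lideal (Ellis \<sigma>) e"
  have LL: "?L = L" by (simp add: L_def)
  let ?P1 = "\<forall>x. \<pi> x = \<xi> \<longrightarrow> separates_idempotents ?L x"
  let ?P2 = "\<forall>x. R_ev \<pi> ?L (\<xi> - \<pi> x) x \<subseteq> greenR ?L"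
  let ?P3 = "\<forall>x. \<pi> x = \<xi> \<longrightarrow> R_ev \<pi> ?L 0 x \<subseteq> greenR ?L"
  have i12: ?P2 if ?P1
  proof (intro allI subsetI)
    fix x p assume "p \<in> R_ev \<pi> ?L (\<xi> - \<pi> x) x"
    then obtain f1 f2 where p: "p = (f1, f2)" and f: "f1 \<in> L" "f2 \<in> L" "f1 x = f2 x"
      "\<pi> (f1 x) - \<pi> x = \<xi> - \<pi> x"
      by (auto simp: R_ev_def pi_tilde_def LL)
    have py: "\<pi> (f1 x) = \<xi>" using f(4) by (metis diff_add_cancel)
    have "inj_on (\<lambda>p. p (f1 x)) (idempotents L)"
      using that py by (auto simp: separates_idempotents_def LL)
    moreover have "idem0 L f1 \<in> idempotents L" "idem0 L f2 \<in> idempotents L"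
      using idem0_props f by (auto simp: idempotents_def)
    moreover have "idem0 L f1 (f1 x) = idem0 L f2 (f1 x)"
      using idem0_props(3)[OF f(1)] idem0_props(3)[OF f(2)] f(3) by (metis comp_apply)
    ultimately have "idem0 L f1 = idem0 L f2" by (meson inj_onD)
    then show "p \<in> greenR ?L" using p f by (auto simp: greenR_def LL)
  qed
  have i23: ?P3 if ?P2
  proof (intro allI impI)
    fix x assume "\<pi> x = \<xi>"
    then show "R_ev \<pi> ?L 0 x \<subseteq> greenR ?L" using that[rule_format, of x] by simp
  qed
  have i31: ?P1 if ?P3
  proof (intro allI impI)
    fix y assume y: "\<pi> y = \<xi>"
    show "separates_idempotents ?L y" unfolding separates_idempotents_def LL
    proof (rule inj_onI)
      fix u1 u2 assume u: "u1 \<in> idempotents L" "u2 \<in> idempotents L" "u1 y = u2 y"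
      have "pi_tilde \<pi> u1 y = 0" "pi_tilde \<pi> u2 y = 0"
        using u idem_pi[OF assms(5)] L_sub by (auto simp: idempotents_def)
      then have "(u1, u2) \<in> R_ev \<pi> ?L 0 y" using u by (auto simp: R_ev_def idempotents_def LL)
      then have "idem0 L u1 = idem0 L u2" using that y by (auto simp: greenR_def LL)
      then show "u1 = u2" using idem0_idem u by (auto simp: idempotents_def)
    qed
  qed
  show ?thesis using i12 i23 i31 by blast
qed

end
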